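(* Let $x\in\{0,1\}^*$ and let $Y\subseteq\{0,1\}^*$ be a finite nonempty set of words with $x\notin Y$. Then there is a $2^{|Y|}$-state AfA that accepts $x$ with probability $1$ and accepts every word of $Y$ with probability $0$.
   Context: An $n$-state affine finite automaton (AfA) over a finite alphabet $\Sigma$ consists of real $n\times n$ matrices $A_\sigma$ for $\sigma\in\Sigma\cup\{\$\}$ ($\$$ a right end-marker), each of whose columns sums to $1$; an initial vector $v_0\in\mathbb{R}^n$ with entries summing to $1$; and a set $E_a$ of accepting states. On input $w=w_1\cdots w_k$ the final vector is $v_f=A_\$A_{w_k}\cdots A_{w_1}v_0$, and $w$ is accepted with probability $\sum_{j\in E_a}|v_f[j]|\big/\sum_{j=1}^n|v_f[j]|$. *)

theory Defs
  imports Complex_Main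
begin

text \<open>Binary alphabet {0,1} rendered as bool (False = 0, True = 1).
  Tape symbols: Some a for a letter a, None for the right end-marker.
  States are 0..n-1; an n x n real matrix is a function nat => nat => real
  (row index first), only entries with indices < n matter.\<close>

type_synonym matrix = "nat \<Rightarrow> nat \<Rightarrow> real"
type_synonym vec = "nat \<Rightarrow> real"

definition mat_vec :: "nat \<Rightarrow> matrix \<Rightarrow> vec \<Rightarrow> vec" where
  "mat_vec n M v = (\<lambda>i. \<Sum>j<n. M i j * v j)"

definition is_AfA :: "nat \<Rightarrow> (bool option \<Rightarrow> matrix) \<Rightarrow> vec \<Rightarrow> nat set \<Rightarrow> bool" where
  "is_AfA n A v0 E \<longleftrightarrow>
     (\<forall>s. \<forall>j<n. (\<Sum>i<n. A s i j) = 1) \<and>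
     (\<Sum>i<n. v0 i) = 1 \<and>
     E \<subseteq> {..<n}"

definition final_vec :: "nat \<Rightarrow> (bool option \<Rightarrow> matrix) \<Rightarrow> vec \<Rightarrow> bool list \<Rightarrow> vec" where
  "final_vec n A v0 w =
     mat_vec n (A None) (foldl (\<lambda>v a. mat_vec n (A (Some a)) v) v0 w)"

definition acc_prob :: "nat \<Rightarrow> (bool option \<Rightarrow> matrix) \<Rightarrow> vec \<Rightarrow> nat set \<Rightarrow> bool list \<Rightarrow> real" where
  "acc_prob n A v0 E w =
     (let vf = final_vec n A v0 w in (\<Sum>j\<in>E. \<bar>vf j\<bar>) / (\<Sum>j<n. \<bar>vf j\<bar>))"

end

theory Submission imports Defs "HOL-Computational_Algebra.Polynomial" begin

definition lpoly :: "(nat \<Rightarrow> real) \<Rightarrow> nat \<Rightarrow> nat \<Rightarrow> real poly" where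
  "lpoly t N i = (\<Prod>j\<in>{..<N}-{i}. smult (1/(t i - t j)) [:- t j, 1:])"

definition L :: "(nat \<Rightarrow> real) \<Rightarrow> nat \<Rightarrow> nat \<Rightarrow> real \<Rightarrow> real" where
  "L t N i z = poly (lpoly t N i) z"

lemma deg_lpoly: "i < N \<Longrightarrow> degree (lpoly t N i) < N"
proof -
  assume i: "i < N"
  have "degree (lpoly t N i) \<le> (\<Sum>j\<in>{..<N}-{i}. degree (smult (1/(t i - t j)) [:- t j, 1:]))"
    unfolding lpoly_def by (rule order_trans[OF degree_prod_sum_le]) (simp_all add: o_def)
  also have "\<dots> \<le> (\<Sum>j\<in>{..<N}-{i}. 1)"
  proof (intro sum_mono)
    fix j show "degree (smult (1/(t i - t j)) [:- t j, 1:]) \<le> 1"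
      using degree_smult_le[of "1/(t i - t j)" "[:- t j, 1:]"] by simp
  qed
  also have "\<dots> = N - 1" using i by simp
  finally show ?thesis using i by linarith
qed

lemma L_eq: "L t N i z = (\<Prod>j\<in>{..<N}-{i}. (z - t j)/(t i - t j))"
  unfolding L_def lpoly_def poly_prod
proof (intro prod.cong refl)
  fix j show "poly (smult (1/(t i - t j)) [:- t j, 1:]) z = (z - t j)/(t i - t j)"
    by (simp add: divide_inverse algebra_simps)
qed

lemma L_node:
  assumes inj: "inj_on t {..<N}" and i: "i < N" and k: "k < N"
  shows "L t N i (t k) = (if i = k then 1 else 0)"
proof (cases "i = k")
  case True
  have "(\<Prod>j\<in>{..<N}-{i}. (t k - t j)/(t i - t j)) = 1"
  proof (rule prod.neutral, rule ballI)
    fix j assume j: "j \<in> {..<N}-{i}"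
    then have "t i \<noteq> t j" using inj i unfolding inj_on_def by blast
    then show "(t k - t j)/(t i - t j) = 1" using True by simp
  qed
  then show ?thesis using True by (simp add: L_eq)
next
  case False
  have "(\<Prod>j\<in>{..<N}-{i}. (t k - t j)/(t i - t j)) = 0"
  proof (rule prod_zero)
    show "finite ({..<N}-{i})" by simp
    show "\<exists>j\<in>{..<N}-{i}. (t k - t j)/(t i - t j) = 0"
      using False k by (intro bexI[of _ k]) auto
  qed
  then show ?thesis using False by (simp add: L_eq)
qed

lemma interp:
  assumes inj: "inj_on t {..<N}" and deg: "degree q < N"
  shows "(\<Sum>j<N. poly q (t j) * L t N j z) = poly q z"
proof -
  define p where "p = (\<Sum>j<N. smult (poly q (t j)) (lpoly t N j))"
  have pz: "poly p z' = (\<Sum>j<N. poly q (t j) * L t N j z')" for z'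
    unfolding p_def L_def by (simp add: poly_sum)
  have "p = q"
  proof (rule poly_eqI_degree[where A="t ` {..<N}"])
    fix x assume "x \<in> t ` {..<N}"
    then obtain k where k: "k < N" "x = t k" by auto
    have "poly p x = (\<Sum>j<N. poly q (t j) * (if j = k then 1 else 0))"
      unfolding pz k(2) using L_node[OF inj _ k(1)] by (intro sum.cong) auto
    also have "\<dots> = poly q x" using k by (simp add: if_distrib cong: if_cong)
    finally show "poly p x = poly q x" .
  next
    have c: "card (t ` {..<N}) = N" using inj by (simp add: card_image)
    have "degree p \<le> N - 1" unfolding p_def
    proof (intro degree_sum_le)
      show "finite {..<N}" by simp
    next
      fix j assume "j \<in> {..<N}"
      then have "degree (lpoly t N j) < N" by (intro deg_lpoly) simp
      then show "degree (smult (poly q (t j)) (lpoly t N j)) \<le> N - 1"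
        using degree_smult_le[of "poly q (t j)" "lpoly t N j"] by linarith
    qed
    then show "degree p < card (t ` {..<N})" using c deg by linarith
    show "degree q < card (t ` {..<N})" using c deg by simp
  qed
  then have "poly q z = (\<Sum>j<N. poly q (t j) * L t N j z)" using pz[of z] by metis
  then show ?thesis by (rule sym)
qed

lemma L_sum: "inj_on t {..<N} \<Longrightarrow> 0 < N \<Longrightarrow> (\<Sum>j<N. L t N j z) = 1"
proof -
  assume a: "inj_on t {..<N}" "0 < N"
  have "degree (1::real poly) < N" using a(2) by simp
  from interp[OF a(1) this, of z] show ?thesis by simp
qed

lemma L_affine:
  assumes inj: "inj_on t {..<N}" and i: "i < N"
  shows "(\<Sum>j<N. L t N i (a * t j + b) * L t N j z) = L t N i (a * z + b)"
proof -
  define q where "q = pcompose (lpoly t N i) [:b, a:]"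
  have d1: "degree [:b, a:] \<le> 1" by simp
  have "degree q \<le> degree (lpoly t N i) * degree [:b, a:]"
    unfolding q_def by (rule degree_pcompose_le)
  also have "\<dots> \<le> degree (lpoly t N i)" using d1
    by (metis mult.right_neutral mult_le_mono2)
  finally have "degree q < N" using deg_lpoly[OF i] by (meson le_less_trans)
  from interp[OF inj this, of z] have
    "(\<Sum>j<N. poly (lpoly t N i) (b + t j * a) * L t N j z) = poly (lpoly t N i) (b + z * a)"
    unfolding q_def by (simp add: poly_pcompose)
  then show ?thesis unfolding L_def by (simp only: add.commute mult.commute)
qed


definition code :: "bool list \<Rightarrow> nat" where
  "code w = foldl (\<lambda>n a. 3*n + (if a then 2 else 1)) 0 w"

lemma code_snoc: "code (w@[a]) = 3 * code w + (if a then 2 else 1)"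
  by (simp add: code_def)

lemma code_Nil: "code [] = 0" by (simp add: code_def)

lemma code_inj_aux: "\<forall>v. code w = code v \<longrightarrow> w = v"
proof (induction w rule: rev_induct)
  case Nil
  show ?case
  proof (intro allI impI)
    fix v assume h: "code [] = code v"
    show "[] = v"
    proof (cases v rule: rev_exhaust)
      case (snoc v' b) then show ?thesis using h by (simp add: code_snoc code_Nil split: if_splits)
    qed simp
  qed
next
  case (snoc a w)
  show ?case
  proof (intro allI impI)
    fix v assume h: "code (w @ [a]) = code v"
    show "w @ [a] = v"
    proof (cases v rule: rev_exhaust)
      case Nil then show ?thesis using h by (simp add: code_snoc code_Nil split: if_splits)
    next
      case (snoc v' b)
      then have h2: "3 * code w + (if a then 2 else 1) = 3 * code v' + (if b then (2::nat) else 1)"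
        using h by (simp add: code_snoc)
      then have "a = b" by (cases a; cases b) presburger+
      with h2 have "code w = code v'" by simp
      then have "w = v'" using snoc.IH by blast
      then show ?thesis using snoc \<open>a = b\<close> by simp
    qed
  qed
qed

lemma code_inj: "code w = code v \<Longrightarrow> w = v"
  using code_inj_aux by blast

lemma sum_reduce:
  fixes N n :: nat
  assumes "N \<le> n" "\<And>j. N \<le> j \<Longrightarrow> f j = 0"
  shows "(\<Sum>j<n. f j) = (\<Sum>j<N. (f j :: real))"
proof (rule sum.mono_neutral_right)
  show "finite {..<n}" by simp
  show "{..<N} \<subseteq> {..<n}" using assms(1) by auto
  show "\<forall>i\<in>{..<n} - {..<N}. f i = 0" using assms(2) by auto
qed

theorem mainTheorem12:
  fixes x :: "bool list" and Y :: "bool list set"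
  assumes "finite Y" and "Y \<noteq> {}" and "x \<notin> Y"
  shows "\<exists>A v0 E. is_AfA (2 ^ card Y) A v0 E \<and>
           acc_prob (2 ^ card Y) A v0 E x = 1 \<and>
           (\<forall>y\<in>Y. acc_prob (2 ^ card Y) A v0 E y = 0)"
proof -
  obtain ys where ys: "set ys = Y" "distinct ys" using finite_distinct_list[OF assms(1)] by blast
  define m where "m = card Y"
  have mlen: "m = length ys" using ys m_def distinct_card by metis
  define N where "N = Suc m"
  define n where "n = (2::nat) ^ m"
  have Nn: "N \<le> n" unfolding N_def n_def using Suc_leI[OF less_exp[of m]] by simp
  have n0: "0 < n" unfolding n_def by simp
  have N0: "0 < N" unfolding N_def by simp
  define t where "t i = real (code ((x#ys)!i))" for i
  have dist: "distinct (x#ys)" using ys assms(3) by simp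
  have inj: "inj_on t {..<N}"
  proof (rule inj_onI)
    fix i j assume i: "i \<in> {..<N}" and j: "j \<in> {..<N}" and e: "t i = t j"
    then have "(x#ys)!i = (x#ys)!j" unfolding t_def by (intro code_inj) simp
    moreover have "i < length (x#ys)" "j < length (x#ys)" using i j mlen N_def by auto
    ultimately show "i = j" using dist nth_eq_iff_index_eq by blast
  qed
  define F where "F w = real (code w)" for w
  define d where "d a = (if a then 2 else 1 :: real)" for a
  have F_snoc: "F (w@[a]) = 3 * F w + d a" for w a
    unfolding F_def d_def by (simp add: code_snoc)
  define A where "A s = (case s of None \<Rightarrow> (\<lambda>i j. if i = j then 1 else 0)
     | Some a \<Rightarrow> (\<lambda>i j. if j < N then (if i < N then L t N i (3 * t j + d a) else 0)
                     else (if i = 0 then 1 else 0)))" for s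
  define V where "V w i = (if i < N then L t N i (F w) else 0)" for w i
  define v0 where "v0 = V []"
  define E where "E = {0::nat}"
  have step: "mat_vec n (A (Some a)) (V w) = V (w@[a])" for w a
  proof
    fix i
    have "mat_vec n (A (Some a)) (V w) i = (\<Sum>j<N. A (Some a) i j * V w j)"
      unfolding mat_vec_def by (rule sum_reduce[OF Nn]) (simp add: V_def)
    also have "\<dots> = V (w@[a]) i"
    proof (cases "i < N")
      case True
      have "(\<Sum>j<N. A (Some a) i j * V w j) = (\<Sum>j<N. L t N i (3 * t j + d a) * L t N j (F w))"
        by (intro sum.cong refl) (simp add: A_def V_def True)
      also have "\<dots> = L t N i (3 * F w + d a)" by (rule L_affine[OF inj True])
      finally show ?thesis by (simp add: V_def True F_snoc)
    next
      case False
      then show ?thesis by (simp add: A_def V_def)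
    qed
    finally show "mat_vec n (A (Some a)) (V w) i = V (w@[a]) i" .
  qed
  have run: "foldl (\<lambda>v a. mat_vec n (A (Some a)) v) v0 w = V w" for w
  proof (induction w rule: rev_induct)
    case Nil show ?case by (simp add: v0_def)
  next
    case (snoc a w) then show ?case by (simp add: step)
  qed
  have fin: "final_vec n A v0 w = V w" for w
  proof
    fix i
    have "final_vec n A v0 w i = (\<Sum>j<n. (if i = j then 1 else 0) * V w j)"
    proof -
      have "final_vec n A v0 w = mat_vec n (A None) (V w)" unfolding final_vec_def run ..
      then show ?thesis by (simp add: mat_vec_def A_def)
    qed
    also have "\<dots> = (\<Sum>j<n. if i = j then V w j else 0)"
      by (intro sum.cong refl) simp
    also have "\<dots> = (if i < n then V w i else 0)"
      by (simp add: sum.delta)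
    also have "\<dots> = V w i" using Nn by (simp add: V_def)
    finally show "final_vec n A v0 w i = V w i" .
  qed
  have afa: "is_AfA n A v0 E"
    unfolding is_AfA_def
  proof (intro conjI allI impI)
    fix s :: "bool option" and j assume j: "j < n"
    show "(\<Sum>i<n. A s i j) = 1"
    proof (cases s)
      case None
      then show ?thesis using j by (simp add: A_def)
    next
      case (Some a)
      show ?thesis
      proof (cases "j < N")
        case True
        have "(\<Sum>i<n. A s i j) = (\<Sum>i<N. A s i j)"
          by (rule sum_reduce[OF Nn]) (simp add: A_def Some True)
        also have "\<dots> = (\<Sum>i<N. L t N i (3 * t j + d a))"
          by (intro sum.cong refl) (simp add: A_def Some True)
        also have "\<dots> = 1" by (rule L_sum[OF inj N0])
        finally show ?thesis .
      next
        case False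
        then show ?thesis using n0 by (simp add: A_def Some)
      qed
    qed
  next
    have "(\<Sum>i<n. v0 i) = (\<Sum>i<N. v0 i)"
      by (rule sum_reduce[OF Nn]) (simp add: v0_def V_def)
    also have "\<dots> = (\<Sum>i<N. L t N i (F []))"
      by (intro sum.cong refl) (simp add: v0_def V_def)
    also have "\<dots> = 1" by (rule L_sum[OF inj N0])
    finally show "(\<Sum>i<n. v0 i) = 1" .
  next
    show "E \<subseteq> {..<n}" using n0 by (simp add: E_def)
  qed
  have Vx: "V x i = (if i = 0 then 1 else 0)" for i
  proof -
    have "F x = t 0" by (simp add: F_def t_def)
    then show ?thesis using L_node[OF inj _ N0] N0 by (simp add: V_def)
  qed
  have accx: "acc_prob n A v0 E x = 1"
  proof -
    have "(\<Sum>j<n. \<bar>V x j\<bar>) = 1" using n0 by (simp add: Vx if_distrib cong: if_cong)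
    then show ?thesis unfolding acc_prob_def fin Let_def E_def by (simp add: Vx)
  qed
  have accy: "acc_prob n A v0 E y = 0" if y: "y \<in> Y" for y
  proof -
    obtain k where k: "k < length ys" "y = ys ! k" using y ys by (metis in_set_conv_nth)
    have "F y = t (Suc k)" by (simp add: F_def t_def k)
    moreover have "Suc k < N" using k mlen N_def by simp
    ultimately have "V y 0 = 0" using L_node[OF inj N0, of "Suc k"] by (simp add: V_def)
    then show ?thesis unfolding acc_prob_def fin Let_def E_def by simp
  qed
  show ?thesis unfolding m_def[symmetric] n_def[symmetric]
    using afa accx accy by blast
qed

end
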